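(* Let $q$ be a power of $2$. For $i=1,\dots,k$, let $b_i,\delta\in\mathbb{F}_q^*$ and let $s_i$ be positive integers. Then the polynomial $$P(x)=\sum_{i=1}^k b_i(x^q+x+\delta)^{s_i}+x$$ is an involution over $\mathbb{F}_{q^2}$.
   Context: A polynomial $P$ is an involution over $\mathbb{F}_{q^2}$ if it is a permutation polynomial of $\mathbb{F}_{q^2}$ equal to its own compositional inverse, i.e. $P(P(c))=c$ for all $c\in\mathbb{F}_{q^2}$. *)

theory Defs
  imports Main
begin

definition involution_on :: "'a set \<Rightarrow> ('a \<Rightarrow> 'a) \<Rightarrow> bool" where
  "involution_on S P \<longleftrightarrow> bij_betw P S S \<and> (\<forall>c\<in>S. P (P c) = c)"

end

theory Submission
  imports Defs
begin

lemma fermat_aux: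
  fixes x :: "'a::{field,finite}"
  assumes "x \<noteq> 0"
  shows "x ^ (card (UNIV::'a set) - 1) = 1"
proof -
  let ?N = "UNIV - {0::'a}"
  have bij: "bij_betw ((*) x) ?N ?N"
    unfolding bij_betw_def inj_on_def using assms
    apply (auto simp: image_def)
    subgoal for y by (rule bexI[of _ "inverse x * y"]) auto
    done
  have "prod id ?N = prod (id \<circ> (*) x) ?N"
    using prod.reindex_bij_betw[OF bij, of id] by simp
  also have "\<dots> = x ^ card ?N * prod id ?N"
    by (simp add: prod.distrib)
  finally have "1 * prod id ?N = x ^ card ?N * prod id ?N" by simp
  moreover have "prod id ?N \<noteq> 0" by (simp add: prod_zero_iff)
  ultimately have "x ^ card ?N = 1" by (metis mult_right_cancel)
  moreover have "card ?N = card (UNIV::'a set) - 1" by (simp add: card_Diff_singleton)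
  ultimately show ?thesis by simp
qed

lemma fermat_full:
  fixes x :: "'a::{field,finite}"
  shows "x ^ card (UNIV::'a set) = x"
proof (cases "x = 0")
  case True thus ?thesis by (simp add: finite_UNIV_card_ge_0)
next
  case False
  have "card (UNIV::'a set) = Suc (card (UNIV::'a set) - 1)" using finite_UNIV_card_ge_0[where 'a='a] by simp
  then have "x ^ card (UNIV::'a set) = x * x ^ (card (UNIV::'a set) - 1)" by (metis power_Suc)
  thus ?thesis using fermat_aux[OF False] by simp
qed

lemma frob:
  fixes x y :: "'a::field"
  assumes two: "(2::'a) = 0"
  shows "(x + y) ^ (2 ^ n) = x ^ (2 ^ n) + y ^ (2 ^ n)"
proof (induction n)
  case 0 thus ?case by simp
next
  case (Suc n)
  have sq: "(a + b) ^ 2 = a ^ 2 + b ^ 2" for a b :: 'a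
  proof -
    have "(a + b) ^ 2 = a^2 + b^2 + 2 * a * b" by (simp add: power2_eq_square algebra_simps)
    thus ?thesis using two by simp
  qed
  have "(x + y) ^ (2 ^ Suc n) = ((x + y) ^ (2 ^ n)) ^ 2"
    by (simp add: power_mult[symmetric] mult.commute)
  also have "\<dots> = (x ^ (2 ^ n)) ^ 2 + (y ^ (2 ^ n)) ^ 2" using Suc sq by simp
  also have "\<dots> = x ^ (2 ^ Suc n) + y ^ (2 ^ Suc n)"
    by (simp add: power_mult[symmetric] mult.commute)
  finally show ?case .
qed

theorem theorem3p2:
  fixes q m k :: nat and b :: "nat \<Rightarrow> 'a::{field,finite}" and \<delta> :: 'a
    and s :: "nat \<Rightarrow> nat"
  assumes "q = 2 ^ m"
    and "card (UNIV :: 'a set) = q ^ 2"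
    and "\<And>i. i \<in> {1..k} \<Longrightarrow> b i \<noteq> 0 \<and> b i ^ q = b i"
    and "\<delta> \<noteq> 0" and "\<delta> ^ q = \<delta>"
    and "\<And>i. i \<in> {1..k} \<Longrightarrow> s i > 0"
  shows "involution_on UNIV (\<lambda>x. (\<Sum>i=1..k. b i * (x ^ q + x + \<delta>) ^ s i) + x)"
proof -
  have c2: "card (UNIV::'a set) \<ge> 2"
  proof -
    have "{0::'a, 1} \<subseteq> UNIV" by simp
    hence "card {0::'a,1} \<le> card (UNIV::'a set)" by (intro card_mono) auto
    thus ?thesis by simp
  qed
  have m0: "m \<noteq> 0" proof
    assume "m = 0" thus False using c2 assms(1,2) by simp qed
  have ev: "even (card (UNIV::'a set))" using assms(1,2) m0 by simp
  have two: "(2::'a) = 0"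
  proof -
    have "odd (card (UNIV::'a set) - 1)" using ev c2 by simp
    hence "(-1::'a) ^ (card (UNIV::'a set) - 1) = -1" by simp
    hence "(-1::'a) = 1" using fermat_aux[of "-1::'a"] by simp
    thus ?thesis by (metis add_eq_0_iff one_add_one)
  qed
  have neg: "-(z::'a) = z" for z using two
    by (metis add_eq_0_iff mult_2 mult_zero_left)
  have fr: "(x + y) ^ q = x ^ q + y ^ q" for x y :: 'a using frob[OF two] assms(1) by simp
  have qq: "((x::'a) ^ q) ^ q = x" for x
    using fermat_full[of x] assms(2) by (simp add: power_mult[symmetric] power2_eq_square)
  have pw: "(z::'a) ^ q = z \<Longrightarrow> (z ^ n) ^ q = z ^ n" for z n
    by (metis power_mult[symmetric] mult.commute power_mult)
  define T where "T x = x ^ q + x + \<delta>" for x :: 'a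
  define S where "S x = (\<Sum>i=1..k. b i * T x ^ s i)" for x
  define P where "P x = S x + x" for x
  have Tq: "T x ^ q = T x" for x
    unfolding T_def using fr qq assms(5) by (simp add: add.commute add.left_commute)
  have Sq: "S x ^ q = S x" for x
  proof -
    have "\<forall>I. finite I \<longrightarrow> I \<subseteq> {1..k} \<longrightarrow> (\<Sum>i\<in>I. b i * T x ^ s i) ^ q = (\<Sum>i\<in>I. b i * T x ^ s i)"
    proof (intro allI impI)
      fix I :: "nat set" assume "finite I" "I \<subseteq> {1..k}"
      thus "(\<Sum>i\<in>I. b i * T x ^ s i) ^ q = (\<Sum>i\<in>I. b i * T x ^ s i)"
      proof (induction I rule: finite_induct)
        case empty thus ?case using assms(1) by simp
      next
        case (insert i I)
        have "(b i * T x ^ s i) ^ q = b i * T x ^ s i"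
          using insert.prems assms(3)[of i] pw[OF Tq] by (simp add: power_mult_distrib)
        thus ?case using insert fr by simp
      qed
    qed
    thus ?thesis unfolding S_def by simp
  qed
  have SS: "S x + S x = 0" for x using two by (metis mult_2 mult_zero_left)
  have TP: "T (P x) = T x" for x
  proof -
    have "T (P x) = S x ^ q + x ^ q + S x + x + \<delta>" unfolding T_def P_def using fr by simp
    also have "\<dots> = (S x + S x) + x ^ q + x + \<delta>" using Sq by (simp add: algebra_simps)
    finally show ?thesis using SS T_def by simp
  qed
  have PP: "P (P x) = x" for x
  proof -
    have "S (P x) = S x" unfolding S_def using TP by simp
    hence "P (P x) = (S x + S x) + x" unfolding P_def by (simp add: algebra_simps)
    thus ?thesis using SS by simp
  qed
  have fe: "(\<lambda>x. (\<Sum>i=1..k. b i * (x ^ q + x + \<delta>) ^ s i) + x) = P"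
    unfolding P_def S_def T_def by simp
  have "bij P" by (metis PP bij_betw_byWitness subset_UNIV) 
  thus ?thesis unfolding fe involution_on_def using PP by simp
qed

end
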